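(* There exist numerical constants $c_0,c_1>0$ such that the following holds. Let $s\in\mathbb{N}$, let $m\ge c_0s^2\log(2s)$ be an integer and $n=9m$. Then for any $w_1,\dots,w_s$ in the closed unit disk $\mathbb{D}=\{w\in\mathbb{C}:|w|\le1\}$, the subspace $X(w_1,\dots,w_s)$ admits a reproducing filter $\varphi^X_+\in\mathbb{C}^+_{2n}(\mathbb{Z})$ such that $$\|\mathcal{F}^+_{2n}[\varphi^X_+]\|_p\le\frac{\mathsf{c}_\star\big(c_1s^2\log(en)\big)^{1/p}}{\sqrt{2n+1}}\quad\text{for all }p\in[1,+\infty],\qquad \mathsf{c}_\star=2.16\pi^2+6.$$
   Context: $\mathbb{C}(\mathbb{Z})$: two-sided complex sequences; $\mathbb{C}^+_N(\mathbb{Z})$: sequences with $x_t=0$ for $t\notin\{0,\dots,N\}$. $(\Delta x)_t=x_{t-1}$, so $(\Delta^{-n}u)_t=u_{t+n}$. $X(w_1,\dots,w_s)=\{x:\mathsf{f}(\Delta)x=0\}$ with $\mathsf{f}(z)=\prod_k(1-w_kz)$. Convolution $(u*v)_t=\sum_\tau u_\tau v_{t-\tau}$; $\varphi$ is reproducing for $X$ if $\varphi*x=x$ for all $x\in X$. DFT $(\mathcal{F}_n[u])_k=(2n+1)^{-1/2}\sum_{|\tau|\le n}\exp(-i2\pi k\tau/(2n+1))u_\tau$, $k=0,\dots,2n$, and the one-sided DFT is $\mathcal{F}^+_{2n}[u]:=\mathcal{F}_n[\Delta^{-n}u]$. *)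

theory Defs
  imports "HOL-Analysis.Analysis"
begin

type_synonym cseq = "int \<Rightarrow> complex"

definition Delta :: "cseq \<Rightarrow> cseq" where
  "Delta x = (\<lambda>t. x (t - 1))"

definition factor_op :: "complex \<Rightarrow> cseq \<Rightarrow> cseq" where
  "factor_op w x = (\<lambda>t. x t - w * Delta x t)"

text \<open>f(Delta) with f(z) = prod_k (1 - w_k z); factors commute.\<close>
definition f_op :: "complex list \<Rightarrow> cseq \<Rightarrow> cseq" where
  "f_op ws x = foldr factor_op ws x"

definition Xsp :: "complex list \<Rightarrow> cseq set" where
  "Xsp ws = {x. f_op ws x = (\<lambda>_. 0)}"

definition Cplus :: "nat \<Rightarrow> cseq set" where
  "Cplus N = {x. \<forall>t. t \<notin> {0..int N} \<longrightarrow> x t = 0}"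

definition conv :: "cseq \<Rightarrow> cseq \<Rightarrow> cseq" where
  "conv u v = (\<lambda>t. infsum (\<lambda>\<tau>. u \<tau> * v (t - \<tau>)) UNIV)"

definition reproducing :: "cseq \<Rightarrow> cseq set \<Rightarrow> bool" where
  "reproducing \<phi> X \<longleftrightarrow> (\<forall>x\<in>X. conv \<phi> x = x)"

text \<open>DFT F_n, components k = 0..2n.\<close>
definition dft :: "nat \<Rightarrow> cseq \<Rightarrow> nat \<Rightarrow> complex" where
  "dft n u k = (1 / sqrt (real (2*n+1))) *
     (\<Sum>\<tau>\<in>{- int n..int n}. exp (- (\<i> * complex_of_real (2 * pi * real k * real_of_int \<tau> / real (2*n+1)))) * u \<tau>)"

text \<open>One-sided DFT: dft_plus n u = F^+_{2n}[u] = F_n[Delta^{-n} u].\<close>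
definition dft_plus :: "nat \<Rightarrow> cseq \<Rightarrow> nat \<Rightarrow> complex" where
  "dft_plus n u = dft n (\<lambda>t. u (t + int n))"

definition lp_norm :: "nat \<Rightarrow> real \<Rightarrow> (nat \<Rightarrow> complex) \<Rightarrow> real" where
  "lp_norm n p v = (\<Sum>k\<le>2*n. cmod (v k) powr p) powr (1 / p)"

definition linf_norm :: "nat \<Rightarrow> (nat \<Rightarrow> complex) \<Rightarrow> real" where
  "linf_norm n v = Max ((\<lambda>k. cmod (v k)) ` {..2*n})"

definition c_star :: real where
  "c_star = 2.16 * pi^2 + 6"

end

theory Submission
  imports Defs "HOL-Computational_Algebra.Polynomial"
begin

definition pop :: "complex poly \<Rightarrow> cseq \<Rightarrow> cseq" where
  "pop p x = (\<lambda>t. \<Sum>i\<le>degree p. coeff p i * x (t - int i))"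

lemma pop_bound:
  assumes "degree p \<le> K"
  shows "pop p x t = (\<Sum>i\<le>K. coeff p i * x (t - int i))"
  unfolding pop_def
  by (rule sum.mono_neutral_left) (use assms in \<open>auto simp: coeff_eq_0\<close>)

lemma pop_add: "pop (p + q) x = (\<lambda>t. pop p x t + pop q x t)"
proof
  fix t
  let ?K = "max (degree p) (degree q)"
  have "degree (p+q) \<le> ?K" by (simp add: degree_add_le)
  then show "pop (p + q) x t = pop p x t + pop q x t"
    by (simp add: pop_bound[of _ ?K] sum.distrib algebra_simps)
qed

lemma pop_smult: "pop (smult a p) x = (\<lambda>t. a * pop p x t)"
proof
  fix t show "pop (smult a p) x t = a * pop p x t"
    using pop_bound[of "smult a p" "degree p"]
    by (simp add: pop_def sum_distrib_left mult.assoc degree_smult_le)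
qed

lemma pop_zero[simp]: "pop 0 x = (\<lambda>t. 0)"
  by (simp add: pop_def)

lemma pop_one[simp]: "pop 1 x = x"
  by (simp add: pop_def)

lemma pop_pCons: "pop (pCons a p) x = (\<lambda>t. a * x t + pop p x (t - 1))"
proof
  fix t
  have "pop (pCons a p) x t = (\<Sum>i\<le>Suc (degree p). coeff (pCons a p) i * x (t - int i))"
    by (rule pop_bound) (simp add: degree_pCons_le)
  also have "\<dots> = a * x t + (\<Sum>i\<le>degree p. coeff p i * x (t - 1 - int i))"
    by (subst sum.atMost_Suc_shift) (simp add: algebra_simps)
  finally show "pop (pCons a p) x t = a * x t + pop p x (t - 1)"
    by (simp add: pop_def)
qed

lemma pop_lin0: "pop p (\<lambda>t. 0) = (\<lambda>t. 0)"
  by (simp add: pop_def)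

lemma pop_linear: "pop p (\<lambda>t. a * x t + y t) = (\<lambda>t. a * pop p x t + pop p y t)"
  by (auto simp: pop_def sum.distrib sum_distrib_left algebra_simps)

lemma pop_mult: "pop (p * q) x = pop p (pop q x)"
proof (induction p)
  case 0
  then show ?case by simp
next
  case (pCons a p)
  have "pop (pCons a p * q) x = pop (smult a q + pCons 0 (p * q)) x"
    by simp
  also have "\<dots> = (\<lambda>t. a * pop q x t + pop (p*q) x (t - 1))"
    by (simp add: pop_add pop_smult pop_pCons)
  also have "\<dots> = pop (pCons a p) (pop q x)"
    by (simp add: pop_pCons pCons.IH)
  finally show ?case .
qed

lemma pop_diff: "pop (p - q) x = (\<lambda>t. pop p x t - pop q x t)"
proof
  fix t
  have e: "p - q = p + smult (-1) q" by simp
  have "pop (p - q) x t = pop (p + smult (-1) q) x t" by (subst e) (rule refl)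
  also have "\<dots> = pop p x t - pop q x t" by (simp only: pop_add pop_smult) simp
  finally show "pop (p - q) x t = pop p x t - pop q x t" .
qed

lemma pop_factor: "pop [:1, -w:] x = factor_op w x"
  by (auto simp: pop_pCons factor_op_def Delta_def)

lemma f_op_pop: "f_op ws x = pop (\<Prod>w\<leftarrow>ws. [:1, -w:]) x"
proof (induction ws)
  case Nil
  then show ?case by (simp add: f_op_def)
next
  case (Cons w ws)
  have "f_op (w # ws) x = factor_op w (f_op ws x)" by (simp add: f_op_def)
  also have "\<dots> = pop [:1, -w:] (pop (\<Prod>w\<leftarrow>ws. [:1, -w:]) x)"
    by (simp add: Cons.IH pop_factor)
  also have "\<dots> = pop ([:1, -w:] * (\<Prod>w\<leftarrow>ws. [:1, -w:])) x"
    by (simp only: pop_mult)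
  finally show ?case by simp
qed

definition seq_of :: "complex poly \<Rightarrow> cseq" where
  "seq_of P = (\<lambda>\<tau>. if \<tau> \<ge> 0 then coeff P (nat \<tau>) else 0)"

lemma conv_seq_of: "conv (seq_of P) x = pop P x"
proof
  fix t
  let ?S = "int ` {..degree P}"
  have "conv (seq_of P) x t = infsum (\<lambda>\<tau>. seq_of P \<tau> * x (t - \<tau>)) ?S"
    unfolding conv_def
  proof (rule infsum_cong_neutral)
    fix \<tau> assume "\<tau> \<in> UNIV - ?S"
    then have "\<tau> < 0 \<or> nat \<tau> > degree P"
    proof (cases "\<tau> \<ge> 0")
      case True
      have "nat \<tau> \<notin> {..degree P}"
      proof
        assume "nat \<tau> \<in> {..degree P}"
        then have "int (nat \<tau>) \<in> ?S" by blast
        with True \<open>\<tau> \<in> UNIV - ?S\<close> show False by simp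
      qed
      then show ?thesis by simp
    qed simp
    then show "seq_of P \<tau> * x (t - \<tau>) = 0" by (auto simp: seq_of_def coeff_eq_0)
  qed auto
  also have "\<dots> = (\<Sum>\<tau>\<in>?S. seq_of P \<tau> * x (t - \<tau>))" by simp
  also have "\<dots> = (\<Sum>i\<le>degree P. seq_of P (int i) * x (t - int i))"
    by (subst sum.reindex) (auto simp: inj_on_def)
  also have "\<dots> = pop P x t" by (simp add: pop_def seq_of_def)
  finally show "conv (seq_of P) x t = pop P x t" .
qed

lemma seq_of_Cplus: "degree P \<le> N \<Longrightarrow> seq_of P \<in> Cplus N"
  by (auto simp: Cplus_def seq_of_def coeff_eq_0)

lemma reproducing_seq_of:
  assumes "1 - P = (\<Prod>w\<leftarrow>ws. [:1, -w:]) * R"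
  shows "reproducing (seq_of P) (Xsp ws)"
  unfolding reproducing_def
proof
  fix x assume "x \<in> Xsp ws"
  then have fx: "pop (\<Prod>w\<leftarrow>ws. [:1, -w:]) x = (\<lambda>_. 0)"
    by (simp add: Xsp_def f_op_pop)
  have P: "P = 1 - R * (\<Prod>w\<leftarrow>ws. [:1, -w:])" using assms by (simp add: algebra_simps)
  have "pop P x = (\<lambda>t. x t - pop R (pop (\<Prod>w\<leftarrow>ws. [:1, -w:]) x) t)"
    by (subst P) (simp add: pop_diff pop_mult)
  also have "\<dots> = x" by (simp add: fx pop_lin0)
  finally show "conv (seq_of P) x = x" by (simp add: conv_seq_of)
qed

definition Ep :: "nat \<Rightarrow> complex \<Rightarrow> complex poly" where
  "Ep L a = smult (1 / of_nat (L+1)) (\<Sum>j\<le>L. monom (a^j) j)"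
definition Hp :: "nat \<Rightarrow> complex \<Rightarrow> complex poly" where
  "Hp L a = smult (1 / of_nat (L+1)) (\<Sum>j\<le>L. \<Sum>i<j. monom (a^i) i)"
definition Rp :: "nat \<Rightarrow> real \<Rightarrow> complex \<Rightarrow> complex poly" where
  "Rp L r w = smult (of_real r) (Hp L (of_real r * w) * (1 + Ep L (of_real r * w)))"
definition Bp :: "nat \<Rightarrow> real \<Rightarrow> complex \<Rightarrow> complex poly" where
  "Bp L r w = [:1, -w:] * Rp L r w"
definition Phi :: "nat \<Rightarrow> real \<Rightarrow> complex list \<Rightarrow> complex poly" where
  "Phi L r ws = 1 - (\<Prod>w\<leftarrow>ws. Bp L r w)"

lemma prod_list_map_mult:
  "(\<Prod>w\<leftarrow>ws. (f w * g w :: 'a :: comm_monoid_mult)) = (\<Prod>w\<leftarrow>ws. f w) * (\<Prod>w\<leftarrow>ws. g w)"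
  by (induction ws) (simp_all add: algebra_simps)

lemma reproducing_Phi: "reproducing (seq_of (Phi L r ws)) (Xsp ws)"
proof (rule reproducing_seq_of[where R = "\<Prod>w\<leftarrow>ws. Rp L r w"])
  have "(\<Prod>w\<leftarrow>ws. Bp L r w) = (\<Prod>w\<leftarrow>ws. [:1, -w:] * Rp L r w)"
    unfolding Bp_def by (rule refl)
  also have "\<dots> = (\<Prod>w\<leftarrow>ws. [:1, -w:]) * (\<Prod>w\<leftarrow>ws. Rp L r w)"
    by (rule prod_list_map_mult)
  finally show "1 - Phi L r ws = (\<Prod>w\<leftarrow>ws. [:1, -w:]) * (\<Prod>w\<leftarrow>ws. Rp L r w)"
    by (simp add: Phi_def)
qed

lemma degree_Ep: "degree (Ep L a) \<le> L"
  unfolding Ep_def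
  by (rule order.trans[OF degree_smult_le]) (rule degree_sum_le, auto intro: order.trans[OF degree_monom_le])

lemma degree_Hp: "degree (Hp L a) \<le> L - 1"
  unfolding Hp_def
  apply (rule order.trans[OF degree_smult_le])
  apply (rule degree_sum_le, simp)
  apply (rule degree_sum_le, simp)
  apply (rule order.trans[OF degree_monom_le])
  by auto

lemma degree_Bp: "L \<ge> 1 \<Longrightarrow> degree (Bp L r w) \<le> 2 * L"
proof -
  assume L: "L \<ge> 1"
  have "degree (Bp L r w) \<le> degree [:1, -w:] + degree (Rp L r w)"
    unfolding Bp_def by (rule degree_mult_le)
  also have "degree (Rp L r w) \<le> degree (Hp L (of_real r * w)) + degree (1 + Ep L (of_real r * w))"
    unfolding Rp_def by (rule order.trans[OF degree_smult_le degree_mult_le])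
  also have "degree (1 + Ep L (of_real r * w)) \<le> L"
    using degree_add_le_max[of 1 "Ep L (of_real r * w)"] degree_Ep[of L "of_real r * w"] by simp
  finally have "degree (Bp L r w) \<le> degree [:1, -w:] + (degree (Hp L (of_real r * w)) + L)"
    by simp
  moreover have "degree [:1, -w:] \<le> 1" by simp
  ultimately have "degree (Bp L r w) \<le> 1 + (L - 1) + L"
    using degree_Hp[of L "of_real r * w"] by linarith
  then show ?thesis using L by simp
qed

lemma degree_prod_list_le:
  "(\<And>w. w \<in> set ws \<Longrightarrow> degree (f w) \<le> K) \<Longrightarrow>
     degree (\<Prod>w\<leftarrow>ws. (f w :: complex poly)) \<le> length ws * K"
proof (induction ws)
  case Nil then show ?case by simp
next
  case (Cons w ws)
  have "degree (\<Prod>w\<leftarrow>w#ws. f w) \<le> degree (f w) + degree (\<Prod>w\<leftarrow>ws. f w)"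
    by (simp add: degree_mult_le)
  also have "\<dots> \<le> K + length ws * K" using Cons by (intro add_mono) auto
  finally show ?case by simp
qed

lemma degree_Phi: "L \<ge> 1 \<Longrightarrow> degree (Phi L r ws) \<le> length ws * (2 * L)"
proof -
  assume L: "L \<ge> 1"
  have "degree (Phi L r ws) \<le> max (degree (1::complex poly)) (degree (\<Prod>w\<leftarrow>ws. Bp L r w))"
    unfolding Phi_def by (rule degree_diff_le_max)
  also have "\<dots> \<le> length ws * (2 * L)"
    using degree_prod_list_le[of ws "Bp L r" "2*L"] degree_Bp[OF L] by simp
  finally show ?thesis .
qed

definition Ef :: "nat \<Rightarrow> complex \<Rightarrow> complex" where
  "Ef L x = (\<Sum>j\<le>L. x^j) / of_nat (L+1)"
definition Hf :: "nat \<Rightarrow> complex \<Rightarrow> complex" where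
  "Hf L x = (\<Sum>j\<le>L. \<Sum>i<j. x^i) / of_nat (L+1)"
definition Bf :: "nat \<Rightarrow> real \<Rightarrow> complex \<Rightarrow> complex" where
  "Bf L r u = of_real r * (1 - u) * Hf L (of_real r * u) * (1 + Ef L (of_real r * u))"

lemma poly_Ep: "poly (Ep L a) z = Ef L (a * z)"
  by (simp add: Ep_def Ef_def poly_sum poly_monom power_mult_distrib sum_divide_distrib)

lemma poly_Hp: "poly (Hp L a) z = Hf L (a * z)"
  by (simp add: Hp_def Hf_def poly_sum poly_monom power_mult_distrib sum_divide_distrib)

lemma poly_Bp: "poly (Bp L r w) z = Bf L r (w * z)"
  by (simp add: Bp_def Rp_def Bf_def poly_Ep poly_Hp algebra_simps)

lemma geom_id: "(1 - x) * (\<Sum>i<j. x^i) = 1 - (x::complex)^j"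
  by (simp add: one_diff_power_eq)

lemma Hf_id: "(1 - x) * Hf L x = 1 - Ef L x"
proof -
  have "(1 - x) * (\<Sum>j\<le>L. \<Sum>i<j. x^i) = (\<Sum>j\<le>L. 1 - x^j)"
    by (simp only: sum_distrib_left[of "1 - x" "\<lambda>j. \<Sum>i<j. x^i"] geom_id)
  also have "\<dots> = of_nat (L+1) - (\<Sum>j\<le>L. x^j)"
    by (simp add: sum_subtractf)
  finally show ?thesis
    by (simp add: Hf_def Ef_def diff_divide_distrib del: of_nat_Suc)
qed

lemma Ef_id: "(1 - x) * Ef L x = (1 - x^(L+1)) / of_nat (L+1)"
proof -
  have "(1 - x) * (\<Sum>j\<le>L. x^j) = 1 - x^(L+1)"
    using geom_id[of x "L+1"] by (simp add: lessThan_Suc_atMost)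
  then show ?thesis by (simp add: Ef_def)
qed

lemma Bf_id: "(1 - of_real r * u) * Bf L r u = of_real r * (1 - u) * (1 - (Ef L (of_real r * u))^2)"
proof -
  have "(1 - of_real r * u) * Bf L r u =
        of_real r * (1 - u) * ((1 - of_real r * u) * Hf L (of_real r * u)) * (1 + Ef L (of_real r * u))"
    by (simp add: Bf_def algebra_simps)
  also have "\<dots> = of_real r * (1 - u) * (1 - Ef L (of_real r * u)) * (1 + Ef L (of_real r * u))"
    by (simp add: Hf_id)
  finally show ?thesis by (simp add: algebra_simps power2_eq_square)
qed

lemma key_real:
  fixes r p q :: real
  assumes "0 \<le> r" "r \<le> 1" "p\<^sup>2 + q\<^sup>2 \<le> 1"
  shows "r\<^sup>2 * ((1 - p)\<^sup>2 + q\<^sup>2) \<le> ((1 - r*p)\<^sup>2 + (r*q)\<^sup>2) - (1 - r)\<^sup>2"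
proof -
  have p1: "p \<le> 1"
  proof (rule ccontr)
    assume "\<not> p \<le> 1" then have "p\<^sup>2 > 1" by (simp add: power2_eq_square) (metis less_1_mult not_le)
    with assms(3) show False by (smt (verit) zero_le_power2)
  qed
  have "((1 - r*p)\<^sup>2 + (r*q)\<^sup>2) - (1 - r)\<^sup>2 - r\<^sup>2 * ((1 - p)\<^sup>2 + q\<^sup>2) = 2*r*(1-r)*(1-p)"
    by (simp add: algebra_simps power2_eq_square)
  moreover have "2*r*(1-r)*(1-p) \<ge> 0" using assms p1 by simp
  ultimately show ?thesis by linarith
qed

lemma cmod_sq: "(cmod z)\<^sup>2 = (Re z)\<^sup>2 + (Im z)\<^sup>2"
  by (simp add: cmod_def)

lemma key_cmod:
  assumes "0 \<le> r" "r \<le> 1" "cmod u \<le> 1"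
  shows "(r * cmod (1 - u))\<^sup>2 \<le> (cmod (1 - of_real r * u))\<^sup>2 - (1 - r)\<^sup>2"
proof -
  have "(Re u)\<^sup>2 + (Im u)\<^sup>2 \<le> 1" using assms(3)
    by (metis cmod_sq norm_ge_zero power_le_one)
  from key_real[OF assms(1,2) this] show ?thesis
    by (simp add: cmod_sq power_mult_distrib)
qed

lemma Bf_bounds:
  fixes L :: nat and r :: real and u :: complex
  assumes r: "r = 1 - 4 / real (L+1)" and L: "L \<ge> 3" and u: "cmod u \<le> 1"
  shows "cmod (Bf L r u) \<le> 1"
    and "cmod (1 - Bf L r u) \<le> (5/4) * (4 / real (L+1)) / cmod (1 - of_real r * u)"
proof -
  define e where "e = 4 / real (L+1)"
  have e_pos: "e > 0" by (simp add: e_def)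
  have e_le: "e \<le> 1" using L by (simp add: e_def field_simps)
  have r_e: "r = 1 - e" by (simp add: r e_def)
  have r0: "0 \<le> r" and r1: "r \<le> 1" using e_le e_pos r_e by auto
  define x where "x = of_real r * u"
  define b where "b = cmod (1 - x)"
  have cx: "cmod x \<le> r" using u r0 by (simp add: x_def norm_mult mult_left_le)
  have hb: "b \<ge> e"
  proof -
    have "cmod (1::complex) - cmod x \<le> cmod (1 - x)" by (rule norm_triangle_ineq2)
    then show ?thesis using cx r_e by (simp add: b_def)
  qed
  have bpos: "b > 0" using hb e_pos by linarith
  define E where "E = Ef L x"
  have hE: "cmod E * b \<le> 2 / real (L+1)"
  proof -
    have "cmod ((1 - x) * E) = cmod (1 - x^(L+1)) / real (L+1)"
      by (simp add: E_def Ef_id norm_divide del: of_nat_Suc)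
    also have "cmod (1 - x^(L+1)) \<le> 2"
    proof -
      have cx1: "cmod x \<le> 1" using cx r1 by linarith
      have "cmod (x^(L+1)) = cmod x ^ (L+1)" by (rule norm_power)
      also have "\<dots> \<le> 1" using cx1 by (intro power_le_one) auto
      finally have "cmod (x^(L+1)) \<le> 1" .
      then show ?thesis using norm_triangle_ineq4[of 1 "x^(L+1)"] by simp
    qed
    finally show ?thesis by (simp add: b_def norm_mult mult.commute divide_right_mono)
  qed
  have hE2: "(cmod E)\<^sup>2 \<le> e\<^sup>2 / (4 * b\<^sup>2)"
  proof -
    have "(cmod E * b)\<^sup>2 \<le> (2 / real (L+1))\<^sup>2"
      using hE bpos by (intro power_mono) auto
    also have "(2 / real (L+1))\<^sup>2 = e\<^sup>2 / 4" by (simp add: e_def power2_eq_square)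
    finally have "(cmod E)\<^sup>2 * b\<^sup>2 \<le> e\<^sup>2 / 4" by (simp add: power_mult_distrib)
    then show ?thesis using bpos by (simp add: field_simps)
  qed
  have hk: "(r * cmod (1 - u))\<^sup>2 \<le> b\<^sup>2 - e\<^sup>2"
    using key_cmod[OF r0 r1 u] by (simp add: b_def x_def r_e)
  have hk': "r * cmod (1 - u) \<le> b"
  proof -
    have "(r * cmod (1 - u))\<^sup>2 \<le> b\<^sup>2" using hk by (smt (verit) zero_le_power2)
    then show ?thesis using bpos by (simp add: power2_le_iff_abs_le)
  qed
  have eb: "e\<^sup>2 \<le> b\<^sup>2" using hb e_pos by (intro power_mono) auto
  define T where "T = e\<^sup>2 / b\<^sup>2"
  have T0: "T \<ge> 0" by (simp add: T_def)
  have hbid: "(1 - x) * Bf L r u = of_real r * (1 - u) * (1 - E^2)"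
    using Bf_id[of r u L] by (simp add: x_def E_def)
  show "cmod (Bf L r u) \<le> 1"
  proof -
    have "b * cmod (Bf L r u) = r * cmod (1 - u) * cmod (1 - E^2)"
      using arg_cong[OF hbid, of cmod] r0 by (simp add: b_def norm_mult)
    also have "cmod (1 - E^2) \<le> 1 + (cmod E)\<^sup>2"
      using norm_triangle_ineq4[of 1 "E^2"] by (simp add: norm_power)
    finally have h1: "b * cmod (Bf L r u) \<le> r * cmod (1 - u) * (1 + (cmod E)\<^sup>2)"
      using r0 by (simp add: mult_left_mono)
    have "(b * cmod (Bf L r u))\<^sup>2 \<le> (r * cmod (1 - u) * (1 + (cmod E)\<^sup>2))\<^sup>2"
      using h1 bpos by (intro power_mono) auto
    also have "\<dots> = (r * cmod (1 - u))\<^sup>2 * (1 + (cmod E)\<^sup>2)\<^sup>2" by (simp add: power_mult_distrib)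
    also have "\<dots> \<le> (b\<^sup>2 - e\<^sup>2) * (1 + T / 4)\<^sup>2"
    proof (rule mult_mono)
      show "(1 + (cmod E)\<^sup>2)\<^sup>2 \<le> (1 + T / 4)\<^sup>2"
        using hE2 by (intro power_mono) (auto simp: T_def field_simps)
    qed (use hk eb in auto)
    also have "\<dots> = b\<^sup>2 * ((1 - T) * (1 + T/4)\<^sup>2)"
      using bpos by (simp add: T_def field_simps)
    also have "\<dots> \<le> b\<^sup>2 * 1"
    proof (rule mult_left_mono)
      have "(1 - T) * (1 + T/4)\<^sup>2 = 1 - T/2 - 7*T^2/16 - T^3/16"
        by (simp add: power2_eq_square power3_eq_cube field_simps)
      moreover have "T^2 \<ge> 0" "T^3 \<ge> 0" using T0 by auto
      ultimately show "(1 - T) * (1 + T/4)\<^sup>2 \<le> 1" using T0 by linarith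
    qed simp
    finally have "(b * cmod (Bf L r u))\<^sup>2 \<le> b\<^sup>2" by simp
    then have "b * cmod (Bf L r u) \<le> b" using bpos by (simp add: power2_le_iff_abs_le)
    then show ?thesis using bpos by simp
  qed
  show "cmod (1 - Bf L r u) \<le> (5/4) * (4 / real (L+1)) / cmod (1 - of_real r * u)"
  proof -
    have id2: "(1 - x) * (1 - Bf L r u) = of_real e + of_real r * (1 - u) * E^2"
      using hbid by (simp add: algebra_simps x_def r_e)
    have "b * cmod (1 - Bf L r u) \<le> e + r * cmod (1 - u) * (cmod E)\<^sup>2"
    proof -
      have "b * cmod (1 - Bf L r u) = cmod (of_real e + of_real r * (1 - u) * E^2)"
        using arg_cong[OF id2, of cmod] by (simp add: b_def norm_mult)
      also have "\<dots> \<le> cmod (of_real e :: complex) + cmod (of_real r * (1 - u) * E^2)"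
        by (rule norm_triangle_ineq)
      also have "\<dots> = e + r * cmod (1 - u) * (cmod E)\<^sup>2"
        using e_pos r0 by (simp add: norm_mult norm_power)
      finally show ?thesis .
    qed
    also have "\<dots> \<le> e + b * (e\<^sup>2 / (4 * b\<^sup>2))"
      using hk' hE2 r0 bpos by (intro add_left_mono mult_mono) auto
    also have "\<dots> = e + e\<^sup>2 / (4 * b)" using bpos by (simp add: power2_eq_square)
    also have "\<dots> \<le> e + e / 4"
    proof -
      have "e\<^sup>2 / (4 * b) \<le> e / 4" using bpos hb e_pos
        by (simp add: power2_eq_square field_simps mult_left_mono)
      then show ?thesis by simp
    qed
    finally have "b * cmod (1 - Bf L r u) \<le> (5/4) * e" by simp
    then have "cmod (1 - Bf L r u) \<le> (5/4) * e / b"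
      using bpos by (simp add: pos_le_divide_eq mult.commute)
    then show ?thesis by (simp add: b_def x_def e_def)
  qed
qed

lemma sin_lower: fixes x :: real assumes "0 \<le> x" "x \<le> 2" shows "sin x \<ge> x / 3"
proof -
  have s: "(\<Sum>m<3. sin_coeff m * x ^ m) = x"
    by (simp add: eval_nat_numeral sin_coeff_Suc cos_coeff_Suc)
  have "\<bar>sin x - x\<bar> \<le> inverse (fact 3) * \<bar>x\<bar> ^ 3"
    using Maclaurin_sin_bound[of x 3] by (simp only: s)
  then have h: "\<bar>sin x - x\<bar> \<le> x^3 / 6" using assms by (simp add: eval_nat_numeral)
  have "x - sin x \<le> \<bar>sin x - x\<bar>" by auto
  with h have "sin x \<ge> x - x^3 / 6" by linarith
  moreover have "x^3 \<le> 4 * x"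
  proof -
    have "x^2 \<le> 2^2" using assms by (intro power_mono) auto
    then have "x * x^2 \<le> x * 4" using assms by (intro mult_left_mono) auto
    then show ?thesis by (simp add: power3_eq_cube power2_eq_square mult.commute)
  qed
  ultimately show ?thesis by linarith
qed

definition chord :: "real \<Rightarrow> real" where "chord y = cmod (1 - cis y)"

lemma chord_sq: "(chord y)\<^sup>2 = 2 - 2 * cos y"
proof -
  have "(chord y)\<^sup>2 = (1 - cos y)\<^sup>2 + (sin y)\<^sup>2"
    by (simp add: chord_def cmod_sq)
  also have "\<dots> = 2 - 2 * cos y"
    using sin_cos_squared_add[of y] by (simp add: power2_eq_square algebra_simps)
  finally show ?thesis .
qed

lemma chord_periodic: "chord (y + 2 * pi * of_int q) = chord y"
proof -
  have "cos (y + 2 * pi * of_int q) = cos y"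
    by (simp add: cos_add cos_int_2pin sin_int_2pin)
  then have "(chord (y + 2 * pi * of_int q))\<^sup>2 = (chord y)\<^sup>2" by (simp add: chord_sq)
  then show ?thesis by (simp add: chord_def power2_eq_iff_nonneg)
qed

lemma chord_lower: assumes "\<bar>y\<bar> \<le> pi" shows "chord y \<ge> \<bar>y\<bar> / 3"
proof -
  define x where "x = \<bar>y\<bar> / 2"
  have x0: "0 \<le> x" and x2: "x \<le> 2" and xpi: "x \<le> pi"
    using assms pi_half_less_two by (auto simp: x_def)
  have cy: "cos y = cos (2 * x)" by (simp add: x_def)
  have "(chord y)\<^sup>2 = 4 * (sin x)\<^sup>2"
    by (simp add: chord_sq cy cos_double_sin)
  also have "\<dots> = (2 * sin x)\<^sup>2" by (simp add: power2_eq_square)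
  finally have cs: "(chord y)\<^sup>2 = (2 * sin x)\<^sup>2" .
  have "chord y = 2 * sin x"
    using cs sin_ge_zero[OF x0 xpi] power2_eq_iff_nonneg[of "chord y" "2 * sin x"]
    by (simp add: chord_def)
  also have "\<dots> \<ge> 2 * (x / 3)" using sin_lower[OF x0 x2] by simp
  finally show ?thesis by (simp add: x_def)
qed

lemma chord_pos_lower:
  assumes "0 \<le> y" "y < 2 * pi"
  shows "chord y \<ge> min y (2 * pi - y) / 3"
proof (cases "y \<le> pi")
  case True
  then show ?thesis using chord_lower[of y] assms by auto
next
  case False
  have "chord y = chord ((y - 2*pi) + 2 * pi * of_int 1)" by simp
  also have "\<dots> = chord (y - 2*pi)" by (rule chord_periodic)
  finally have "chord y = chord (y - 2 * pi)" .
  moreover have "chord (y - 2*pi) \<ge> \<bar>y - 2*pi\<bar> / 3"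
    using False assms by (intro chord_lower) auto
  ultimately show ?thesis using assms by auto
qed

lemma cmod_1_rho_cis_sq: "(cmod (1 - of_real \<rho> * cis t))\<^sup>2 = 1 - 2 * \<rho> * cos t + \<rho>\<^sup>2"
proof -
  have "(cmod (1 - of_real \<rho> * cis t))\<^sup>2 = (1 - \<rho> * cos t)\<^sup>2 + (\<rho> * sin t)\<^sup>2"
    by (simp add: cmod_sq)
  also have "\<dots> = 1 - 2 * \<rho> * cos t + \<rho>\<^sup>2"
  proof -
    have sc: "sin t * sin t = 1 - cos t * cos t"
      using sin_cos_squared_add[of t] by (simp add: power2_eq_square)
    have "(1 - \<rho> * cos t)\<^sup>2 + (\<rho> * sin t)\<^sup>2 = 1 - 2 * \<rho> * cos t + \<rho>\<^sup>2 * (sin t * sin t + cos t * cos t)"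
      by (simp only: power2_eq_square) (simp only: algebra_simps)
    then show ?thesis by (simp only: sc) simp
  qed
  finally show ?thesis .
qed

lemma rho_chord:
  assumes "0 \<le> \<rho>" "\<rho> \<le> 1"
  shows "cmod (1 - of_real \<rho> * cis t) \<ge> (3/8) * chord t"
proof -
  have ch: "(chord t)\<^sup>2 = 2 - 2 * cos t" by (rule chord_sq)
  have c1: "cos t \<le> 1" by simp
  have ch2: "((3/8) * chord t)\<^sup>2 = (9/64) * (2 - 2 * cos t)"
    by (simp only: power_mult_distrib ch) (simp add: power2_eq_square)
  have "(cmod (1 - of_real \<rho> * cis t))\<^sup>2 \<ge> ((3/8) * chord t)\<^sup>2"
  proof (cases "\<rho> \<ge> 1/4")
    case True
    have "1 - 2 * \<rho> * cos t + \<rho>\<^sup>2 - \<rho> * (2 - 2 * cos t) = (1 - \<rho>)\<^sup>2"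
      by (simp add: power2_eq_square algebra_simps)
    then have h1: "\<rho> * (2 - 2 * cos t) \<le> 1 - 2 * \<rho> * cos t + \<rho>\<^sup>2" by (smt (verit) zero_le_power2)
    have h2: "1/4 * (2 - 2 * cos t) \<le> \<rho> * (2 - 2 * cos t)"
      using True c1 by (intro mult_right_mono) auto
    have h3: "0 \<le> 2 - 2 * cos t" using c1 by simp
    have "9 / 64 * (2 - 2 * cos t) \<le> 1 / 4 * (2 - 2 * cos t)" using h3 by (intro mult_right_mono) auto
    also note h2 also note h1
    finally show ?thesis unfolding cmod_1_rho_cis_sq ch2 .
  next
    case False
    have e1: "1 - 2 * \<rho> * cos t + \<rho>\<^sup>2 = (1 - \<rho>)\<^sup>2 + 2 * \<rho> * (1 - cos t)"
      by (simp add: power2_eq_square algebra_simps)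
    have e2: "2 * \<rho> * (1 - cos t) \<ge> 0" using assms c1 by simp
    have e3: "(1 - \<rho>)\<^sup>2 \<ge> (3/4)\<^sup>2" using False assms by (intro power_mono) auto
    have e4: "(9/64) * (2 - 2 * cos t) \<le> (3/4)\<^sup>2"
    proof -
      show ?thesis by (simp add: power2_eq_square) (use cos_ge_minus_one[of t] in linarith)
    qed
    show ?thesis unfolding cmod_1_rho_cis_sq ch2 e1 using e2 e3 e4 by linarith
  qed
  then show ?thesis
    by (rule power2_le_imp_le) simp
qed

lemma gridpt:
  fixes \<alpha> :: real and N k :: nat
  assumes N: "N \<ge> 1"
  defines "j0 \<equiv> \<lfloor>\<alpha> * real N / (2 * pi)\<rfloor>"
  defines "m \<equiv> nat ((j0 - int k) mod int N)"
  shows "chord (\<alpha> - 2 * pi * real k / real N) \<ge> (2 / real N) * real (min m (N - 1 - m))"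
    and "m < N"
proof -
  define \<beta> where "\<beta> = \<alpha> * real N / (2 * pi)"
  define f where "f = \<beta> - of_int j0"
  have f0: "0 \<le> f"
    using of_int_floor_le[of \<beta>] unfolding f_def j0_def \<beta>_def by linarith
  have f1: "f < 1"
    using real_of_int_floor_add_one_gt[of \<beta>] unfolding f_def j0_def \<beta>_def by linarith
  define q where "q = (j0 - int k) div int N"
  have Npos: "int N > 0" using N by simp
  have mnn: "(j0 - int k) mod int N \<ge> 0" using Npos by simp
  have mint: "int m = (j0 - int k) mod int N" using mnn by (simp add: m_def)
  have jq: "j0 - int k = int m + int N * q"
    unfolding mint q_def by simp
  have "(j0 - int k) mod int N < int N" using Npos by (rule pos_mod_bound)
  then show mN: "m < N" using mint by linarith
  have jq': "real_of_int j0 - real k = real m + real N * real_of_int q"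
  proof -
    have "real_of_int (j0 - int k) = real_of_int (int m + int N * q)" using jq by simp
    then show ?thesis by simp
  qed
  define y where "y = (2 * pi / real N) * (f + real m)"
  have ang: "\<alpha> - 2 * pi * real k / real N = y + 2 * pi * of_int q"
  proof -
    have NN: "real N > 0" using N by simp
    have "\<alpha> - 2 * pi * real k / real N = (2 * pi / real N) * (\<beta> - real k)"
      using NN by (simp add: \<beta>_def field_simps)
    also have "\<beta> - real k = f + (real_of_int j0 - real k)" by (simp add: f_def)
    also have "\<dots> = (f + real m) + real N * real_of_int q" by (simp add: jq')
    also have "(2 * pi / real N) * ((f + real m) + real N * real_of_int q) =
               y + (2 * pi / real N) * real N * real_of_int q"
      by (simp add: y_def distrib_left)
    also have "(2 * pi / real N) * real N = 2 * pi" using NN by simp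
    finally show ?thesis by simp
  qed
  have y0: "0 \<le> y" using f0 by (simp add: y_def)
  have fmN: "f + real m < real N" using f1 mN by linarith
  have y2: "y < 2 * pi"
  proof -
    have "y = 2 * pi * ((f + real m) / real N)" by (simp add: y_def)
    moreover have "(f + real m) / real N < 1" using fmN N by simp
    then have "2 * pi * ((f + real m) / real N) < 2 * pi * 1"
      by (intro mult_strict_left_mono) auto
    ultimately show ?thesis by simp
  qed
  have "chord (\<alpha> - 2 * pi * real k / real N) = chord y"
    by (simp only: ang chord_periodic)
  also have "chord y \<ge> min y (2 * pi - y) / 3" by (rule chord_pos_lower[OF y0 y2])
  finally have c: "chord (\<alpha> - 2 * pi * real k / real N) \<ge> min y (2 * pi - y) / 3" .
  have pi3: "2 * pi / 3 \<ge> 2" using pi_gt3 by simp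
  have A: "y / 3 \<ge> (2 / real N) * real m"
  proof -
    have "y / 3 = (2 * pi / 3) * ((f + real m) / real N)" by (simp add: y_def)
    also have "(f + real m) / real N \<ge> real m / real N" using f0 N by (simp add: divide_right_mono)
    then have "(2 * pi / 3) * ((f + real m) / real N) \<ge> 2 * (real m / real N)"
      using pi3 by (intro mult_mono) auto
    finally show ?thesis by simp
  qed
  have B: "(2 * pi - y) / 3 \<ge> (2 / real N) * real (N - 1 - m)"
  proof -
    have NN: "real N > 0" using N by simp
    have "(2 * pi - y) / 3 = (2 * pi / 3) * ((real N - f - real m) / real N)"
      using NN by (simp add: y_def field_simps)
    moreover have "(real N - f - real m) / real N \<ge> real (N - 1 - m) / real N"
    proof (rule divide_right_mono)
      have "real (N - 1 - m) = real N - 1 - real m" using mN by (simp add: of_nat_diff)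
      then show "real (N - 1 - m) \<le> real N - f - real m" using f1 by linarith
    qed simp
    then have "(2 * pi / 3) * ((real N - f - real m) / real N) \<ge> 2 * (real (N - 1 - m) / real N)"
      using pi3 by (intro mult_mono) auto
    ultimately show ?thesis by simp
  qed
  have "min y (2 * pi - y) / 3 \<ge> (2 / real N) * real (min m (N - 1 - m))"
  proof (cases "m \<le> N - 1 - m")
    case True
    then have "real (min m (N - 1 - m)) = real m" by simp
    moreover have "(2 / real N) * real m \<le> (2 / real N) * real (N - 1 - m)"
      using True by (intro mult_left_mono) auto
    ultimately show ?thesis using A B by (simp add: min_def)
  next
    case False
    then have "real (min m (N - 1 - m)) = real (N - 1 - m)" by simp
    moreover have "(2 / real N) * real (N - 1 - m) \<le> (2 / real N) * real m"
      using False by (intro mult_left_mono) auto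
    ultimately show ?thesis using A B by (simp add: min_def)
  qed
  with c show "chord (\<alpha> - 2 * pi * real k / real N) \<ge> (2 / real N) * real (min m (N - 1 - m))"
    by linarith
qed

lemma bij_mod:
  assumes N: "N \<ge> 1"
  shows "bij_betw (\<lambda>k. nat ((j0 - int k) mod int N)) {..<N} {..<N}"
proof -
  let ?g = "\<lambda>k. nat ((j0 - int k) mod int N)"
  have inj: "inj_on ?g {..<N}"
  proof
    fix a b assume a: "a \<in> {..<N}" and b: "b \<in> {..<N}" and e: "?g a = ?g b"
    have "(j0 - int a) mod int N = (j0 - int b) mod int N"
      using e N by (simp add: nat_eq_iff2)
    then have "int N dvd (j0 - int a) - (j0 - int b)"
      by (simp add: mod_eq_dvd_iff)
    then have d: "int N dvd (int b - int a)" by simp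
    show "a = b"
    proof (rule ccontr)
      assume "a \<noteq> b"
      then have "int b - int a \<noteq> 0" by simp
      from dvd_imp_le_int[OF this d] have "int N \<le> \<bar>int b - int a\<bar>" by simp
      with a b show False by auto
    qed
  qed
  have sub: "?g ` {..<N} \<subseteq> {..<N}"
  proof
    fix x assume "x \<in> ?g ` {..<N}"
    then obtain k where "x = ?g k" by auto
    moreover have "(j0 - int k) mod int N < int N" using N by simp
    moreover have "(j0 - int k) mod int N \<ge> 0" using N by simp
    ultimately show "x \<in> {..<N}" by (simp add: nat_less_iff)
  qed
  have "?g ` {..<N} = {..<N}"
    by (rule endo_inj_surj[OF _ sub inj]) simp
  with inj show ?thesis by (simp add: bij_betw_def)
qed

lemma harm_bound: assumes "N \<ge> 1" shows "(\<Sum>m<N. inverse (real m)) \<le> 1 + ln (real N)"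
proof -
  obtain M where NM: "N = Suc M" using assms by (cases N) auto
  have "(\<Sum>m<N. inverse (real m)) = (\<Sum>m<M. inverse (real (Suc m)))"
    unfolding NM by (subst sum.lessThan_Suc_shift) simp
  also have "\<dots> = harm M" by (simp add: harm_altdef)
  also have "\<dots> \<le> harm N" by (rule harm_mono) (simp add: NM)
  also have "harm N - ln (real N) \<le> harm 1 - ln (real 1)"
    using euler_mascheroni_sequence_decreasing[of 1 N] assms by simp
  then have "harm N \<le> 1 + ln (real N)" by (simp add: harm_def)
  finally show ?thesis .
qed

lemma inv_min_le: assumes "a > 0" "b > 0"
  shows "inverse (real (min a b)) \<le> inverse (real a) + inverse (real b)"
  using assms by (cases "a \<le> b") (auto simp: min_def)

lemma factor_sum:
  fixes L N :: nat and r :: real and w :: complex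
  assumes r: "r = 1 - 4 / real (L+1)" and L: "L \<ge> 3" and w: "cmod w \<le> 1" and N: "N \<ge> 1"
  shows "(\<Sum>k<N. cmod (1 - Bf L r (w * cis (- (2 * pi * real k / real N)))))
          \<le> 4 + (10/3) * (4 / real (L+1)) * real N * (1 + ln (real N))"
proof -
  define e where "e = 4 / real (L+1)"
  define A where "A = (10/3) * e"
  have e0: "e > 0" by (simp add: e_def)
  have A0: "A \<ge> 0" using e0 by (simp add: A_def)
  have lnN: "ln (real N) \<ge> 0" using N by simp
  define c where "c = (\<lambda>k. cmod (1 - Bf L r (w * cis (- (2 * pi * real k / real N)))))"
  have r0: "0 \<le> r" and r1: "r \<le> 1" using L by (auto simp: r field_simps)
  have cu: "cmod (w * cis t) \<le> 1" for t using w by (simp add: norm_mult)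
  have c2: "c k \<le> 2" for k
  proof -
    have "cmod (Bf L r (w * cis (- (2 * pi * real k / real N)))) \<le> 1"
      by (rule Bf_bounds(1)[OF r L cu])
    then show ?thesis using norm_triangle_ineq4[of 1 "Bf L r (w * cis (- (2 * pi * real k / real N)))"]
      by (simp add: c_def)
  qed
  have cb: "c k \<le> (5/4) * e / cmod (1 - of_real r * (w * cis (- (2 * pi * real k / real N))))" for k
    unfolding c_def e_def by (rule Bf_bounds(2)[OF r L cu])
  show ?thesis
  proof (cases "w = 0")
    case True
    have "c k \<le> A" for k
    proof -
      have "c k \<le> (5/4) * e" using cb[of k] True by simp
      then show ?thesis using e0 by (simp add: A_def)
    qed
    then have "(\<Sum>k<N. c k) \<le> real N * A"
      using sum_mono[of "{..<N}" c "\<lambda>_. A"] by simp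
    also have "\<dots> \<le> 4 + A * real N * (1 + ln (real N))"
    proof -
      have "A * real N * 1 \<le> A * real N * (1 + ln (real N))"
        using A0 lnN by (intro mult_left_mono) auto
      then have "real N * A \<le> A * real N * (1 + ln (real N))" by (simp add: mult.commute)
      then show ?thesis by simp
    qed
    finally show ?thesis by (simp add: c_def A_def e_def)
  next
    case False
    define \<alpha> where "\<alpha> = Arg w"
    define \<rho> where "\<rho> = cmod w"
    have wpol: "w = of_real \<rho> * cis \<alpha>"
      using rcis_cmod_Arg[of w] by (simp add: rcis_def \<rho>_def \<alpha>_def)
    define j0 where "j0 = \<lfloor>\<alpha> * real N / (2 * pi)\<rfloor>"
    define g where "g = (\<lambda>k. nat ((j0 - int k) mod int N))"
    define T where "T = (\<lambda>m. (if m = 0 then 2 else 0) + (if m = N - 1 then 2 else 0) +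
                         (A * real N / 2) * (inverse (real m) + inverse (real (N - 1 - m))))"
    have Tk: "c k \<le> T (g k)" for k
    proof -
      let ?m = "g k"
      have ch: "chord (\<alpha> - 2 * pi * real k / real N) \<ge> (2 / real N) * real (min ?m (N - 1 - ?m))"
        using gridpt(1)[OF N, of \<alpha> k] by (simp add: g_def j0_def)
      have ru: "of_real r * (w * cis (- (2 * pi * real k / real N))) =
                of_real (r * \<rho>) * cis (\<alpha> - 2 * pi * real k / real N)"
      proof -
        have cc: "cis \<alpha> * cis (- (2 * pi * real k / real N)) = cis (\<alpha> - 2 * pi * real k / real N)"
          using cis_mult[of \<alpha> "- (2 * pi * real k / real N)"] by simp
        have "of_real r * (w * cis (- (2 * pi * real k / real N))) =
              of_real r * of_real \<rho> * (cis \<alpha> * cis (- (2 * pi * real k / real N)))"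
          by (simp only: wpol mult.assoc)
        also have "\<dots> = of_real (r * \<rho>) * cis (\<alpha> - 2 * pi * real k / real N)"
          by (simp only: cc of_real_mult)
        finally show ?thesis .
      qed
      have rr: "0 \<le> r * \<rho>" "r * \<rho> \<le> 1"
        using r0 r1 w by (auto simp: \<rho>_def mult_le_one)
      have lb: "cmod (1 - of_real r * (w * cis (- (2 * pi * real k / real N)))) \<ge>
                (3/8) * chord (\<alpha> - 2 * pi * real k / real N)"
        unfolding ru by (rule rho_chord[OF rr])
      have Tnn: "(A * real N / 2) * (inverse (real ?m) + inverse (real (N - 1 - ?m))) \<ge> 0"
        using A0 by simp
      show ?thesis
      proof (cases "min ?m (N - 1 - ?m) = 0")
        case True
        have mlt: "?m < N" using gridpt(2)[OF N, of \<alpha> k] by (simp add: g_def j0_def)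
        with True have "?m = 0 \<or> ?m = N - 1" by (auto simp: min_def split: if_splits)
        then have "T ?m \<ge> 2" using Tnn by (auto simp: T_def)
        then show ?thesis using c2[of k] by linarith
      next
        case False
        define mn where "mn = real (min ?m (N - 1 - ?m))"
        have mn0: "mn > 0" using False by (simp add: mn_def)
        have NN: "real N > 0" using N by simp
        have lb2: "cmod (1 - of_real r * (w * cis (- (2 * pi * real k / real N)))) \<ge> (3/8) * ((2 / real N) * mn)"
          using lb ch by (simp add: mn_def)
        have pos: "(3/8) * ((2 / real N) * mn) > 0" using mn0 NN by simp
        have "(5/4) * e / cmod (1 - of_real r * (w * cis (- (2 * pi * real k / real N))))
              \<le> (5/4) * e / ((3/8) * ((2 / real N) * mn))"
        proof (rule divide_left_mono[OF lb2])
          have Xpos: "cmod (1 - of_real r * (w * cis (- (2 * pi * real k / real N)))) > 0"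
            using lb2 pos by linarith
          show "0 < cmod (1 - of_real r * (w * cis (- (2 * pi * real k / real N)))) * ((3/8) * ((2 / real N) * mn))"
            using Xpos pos by (rule mult_pos_pos)
        qed (use e0 in auto)
        with cb[of k] have "c k \<le> (5/4) * e / ((3/8) * ((2 / real N) * mn))" by linarith
        also have "\<dots> = (A * real N / 2) * inverse mn"
          using NN mn0 by (simp add: A_def field_simps)
        also have "inverse mn \<le> inverse (real ?m) + inverse (real (N - 1 - ?m))"
          unfolding mn_def by (rule inv_min_le) (use False in auto)
        then have "(A * real N / 2) * inverse mn \<le> (A * real N / 2) * (inverse (real ?m) + inverse (real (N - 1 - ?m)))"
          using A0 by (intro mult_left_mono) auto
        also have "\<dots> \<le> T ?m" by (simp add: T_def)
        finally show ?thesis .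
      qed
    qed
    have "(\<Sum>k<N. c k) \<le> (\<Sum>k<N. T (g k))" by (rule sum_mono) (rule Tk)
    also have "\<dots> = (\<Sum>m<N. T m)"
      using sum.reindex_bij_betw[OF bij_mod[OF N, of j0], of T] by (simp add: g_def)
    also have "\<dots> = 2 + 2 + (A * real N / 2) * ((\<Sum>m<N. inverse (real m)) + (\<Sum>m<N. inverse (real (N - 1 - m))))"
    proof -
      have "(\<Sum>m<N. T m) = (\<Sum>m<N. (if m = 0 then 2 else 0)) + (\<Sum>m<N. (if m = N - 1 then 2 else 0)) +
            (\<Sum>m<N. (A * real N / 2) * (inverse (real m) + inverse (real (N - 1 - m))))"
        unfolding T_def by (simp only: sum.distrib)
      also have "(\<Sum>m<N. (A * real N / 2) * (inverse (real m) + inverse (real (N - 1 - m)))) =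
                 (A * real N / 2) * ((\<Sum>m<N. inverse (real m)) + (\<Sum>m<N. inverse (real (N - 1 - m))))"
        by (simp only: sum_distrib_left[symmetric] sum.distrib)
      also have "(\<Sum>m<N. (if m = 0 then 2 else 0)) = (2::real)" using N by simp
      also have "(\<Sum>m<N. (if m = N - 1 then 2 else 0)) = (2::real)" using N by simp
      finally show ?thesis .
    qed
    also have "(\<Sum>m<N. inverse (real (N - 1 - m))) = (\<Sum>m<N. inverse (real m))"
      using sum.nat_diff_reindex[of "\<lambda>m. inverse (real m)" N] by simp
    also have "2 + 2 + (A * real N / 2) * ((\<Sum>m<N. inverse (real m)) + (\<Sum>m<N. inverse (real m)))
              = 4 + A * real N * (\<Sum>m<N. inverse (real m))" by simp
    also have "\<dots> \<le> 4 + A * real N * (1 + ln (real N))"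
      using harm_bound[OF N] A0 by (simp add: mult_left_mono)
    finally show ?thesis by (simp add: c_def A_def e_def)
  qed
qed

lemma exp_to_cis: "exp (- (\<i> * complex_of_real x)) = cis (- x)"
  by (simp add: cis_conv_exp)

lemma dft_plus_poly:
  assumes "degree P \<le> 2 * n"
  shows "dft_plus n (seq_of P) k =
     (1 / sqrt (real (2*n+1))) * (cis (2 * pi * real k * real n / real (2*n+1)) *
        poly P (cis (- (2 * pi * real k / real (2*n+1)))))"
proof -
  define N where "N = real (2*n+1)"
  have Npos: "N > 0" by (simp add: N_def)
  define z where "z = cis (- (2 * pi * real k / N))"
  define F where "F = (\<lambda>\<tau>::int. exp (- (\<i> * complex_of_real (2 * pi * real k * real_of_int \<tau> / N))) * seq_of P (\<tau> + int n))"
  have img: "(\<lambda>j::nat. int j - int n) ` {..2*n} = {- int n..int n}"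
  proof
    show "(\<lambda>j::nat. int j - int n) ` {..2*n} \<subseteq> {- int n..int n}" by auto
    show "{- int n..int n} \<subseteq> (\<lambda>j::nat. int j - int n) ` {..2*n}"
    proof
      fix \<tau> assume h: "\<tau> \<in> {- int n..int n}"
      then have "\<tau> = int (nat (\<tau> + int n)) - int n" "nat (\<tau> + int n) \<in> {..2*n}" by auto
      then show "\<tau> \<in> (\<lambda>j::nat. int j - int n) ` {..2*n}" by blast
    qed
  qed
  have inj: "inj_on (\<lambda>j::nat. int j - int n) {..2*n}" by (auto simp: inj_on_def)
  have "(\<Sum>\<tau>\<in>{- int n..int n}. F \<tau>) = (\<Sum>j\<le>2*n. F (int j - int n))"
    by (subst img[symmetric], subst sum.reindex[OF inj]) simp
  also have "\<dots> = (\<Sum>j\<le>2*n. cis (2 * pi * real k * real n / N) * (coeff P j * z ^ j))"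
  proof (rule sum.cong[OF refl])
    fix j assume "j \<in> {..2*n}"
    have "exp (- (\<i> * complex_of_real (2 * pi * real k * real_of_int (int j - int n) / N))) =
          cis (- (2 * pi * real k * (real j - real n) / N))"
    proof -
      have e: "2 * pi * real k * real_of_int (int j - int n) / N = 2 * pi * real k * (real j - real n) / N"
        by simp
      show ?thesis by (simp only: e exp_to_cis)
    qed
    also have "- (2 * pi * real k * (real j - real n) / N) =
               2 * pi * real k * real n / N + real j * (- (2 * pi * real k / N))"
      using Npos by (simp add: field_simps)
    also have "cis \<dots> = cis (2 * pi * real k * real n / N) * z ^ j"
      by (simp only: z_def Complex.DeMoivre cis_mult)
    finally show "F (int j - int n) = cis (2 * pi * real k * real n / N) * (coeff P j * z ^ j)"
      by (simp add: F_def seq_of_def)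
  qed
  also have "\<dots> = cis (2 * pi * real k * real n / N) * (\<Sum>j\<le>2*n. coeff P j * z ^ j)"
    by (simp add: sum_distrib_left)
  also have "(\<Sum>j\<le>2*n. coeff P j * z ^ j) = poly P z"
    unfolding poly_altdef
    by (rule sum.mono_neutral_right) (use assms in \<open>auto simp: coeff_eq_0\<close>)
  finally have "(\<Sum>\<tau>\<in>{- int n..int n}. F \<tau>) = cis (2 * pi * real k * real n / N) * poly P z" .
  then show ?thesis
    by (simp add: dft_plus_def dft_def F_def N_def z_def)
qed

lemma cmod_dft_plus:
  assumes "degree P \<le> 2 * n"
  shows "cmod (dft_plus n (seq_of P) k) =
     cmod (poly P (cis (- (2 * pi * real k / real (2*n+1))))) / sqrt (real (2*n+1))"
  unfolding dft_plus_poly[OF assms] by (simp add: norm_mult norm_divide)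

lemma telescope0:
  "(\<forall>b\<in>set bs. cmod b \<le> 1) \<Longrightarrow>
    cmod (1 - prod_list bs) \<le> (\<Sum>b\<leftarrow>bs. cmod (1 - b)) \<and> cmod (prod_list bs) \<le> 1"
proof (induction bs)
  case Nil
  then show ?case by simp
next
  case (Cons b bs)
  have hb: "cmod b \<le> 1" using Cons.prems by simp
  have IH1: "cmod (1 - prod_list bs) \<le> (\<Sum>b\<leftarrow>bs. cmod (1 - b))"
    and IH2: "cmod (prod_list bs) \<le> 1" using Cons.IH Cons.prems by auto
  have A: "cmod (prod_list (b # bs)) \<le> 1"
    using hb IH2 by (simp add: norm_mult mult_le_one)
  have "1 - prod_list (b # bs) = (1 - b) + b * (1 - prod_list bs)" by (simp add: algebra_simps)
  then have "cmod (1 - prod_list (b # bs)) \<le> cmod (1 - b) + cmod b * cmod (1 - prod_list bs)"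
    by (metis norm_mult norm_triangle_ineq)
  also have "cmod b * cmod (1 - prod_list bs) \<le> 1 * cmod (1 - prod_list bs)"
    using hb by (intro mult_right_mono) auto
  finally have "cmod (1 - prod_list (b # bs)) \<le> (\<Sum>b\<leftarrow>b # bs. cmod (1 - b))"
    using IH1 by simp
  with A show ?case by simp
qed

lemma poly_Phi: "poly (Phi L r ws) z = 1 - (\<Prod>w\<leftarrow>ws. Bf L r (w * z))"
proof -
  have "poly (\<Prod>w\<leftarrow>ws. Bp L r w) z = (\<Prod>w\<leftarrow>ws. Bf L r (w * z))"
    by (induction ws) (simp_all add: poly_Bp)
  then show ?thesis by (simp add: Phi_def)
qed

lemma sum_sum_list_swap:
  "(\<Sum>k\<in>K. (\<Sum>w\<leftarrow>ws. (f k w :: real))) = (\<Sum>w\<leftarrow>ws. (\<Sum>k\<in>K. f k w))"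
  by (induction ws) (simp_all add: sum.distrib)

lemma sum_list_le_const:
  "(\<And>w. w \<in> set ws \<Longrightarrow> (g w :: real) \<le> B) \<Longrightarrow> (\<Sum>w\<leftarrow>ws. g w) \<le> real (length ws) * B"
  by (induction ws) (auto simp: algebra_simps intro: add_mono)

lemma main_bounds:
  fixes s n :: nat and ws :: "complex list"
  assumes s1: "s \<ge> 1" and ns: "n \<ge> 4 * s" and len: "length ws = s"
    and hw: "\<forall>w\<in>set ws. cmod w \<le> 1"
  defines "L \<equiv> n div s"
  defines "r \<equiv> 1 - 4 / real (L+1)"
  defines "P \<equiv> Phi L r ws"
  defines "a \<equiv> (\<lambda>k. cmod (poly P (cis (- (2 * pi * real k / real (2*n+1))))))"
  shows "degree P \<le> 2 * n" and "\<And>k. a k \<le> 2"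
    and "(\<Sum>k\<le>2*n. a k) \<le> 124 * real s ^ 2 * ln (exp 1 * real n)"
proof -
  have L4: "L \<ge> 4"
  proof -
    have "(4 * s) div s \<le> n div s" using ns by (rule div_le_mono)
    then show ?thesis using s1 by (simp add: L_def)
  qed
  then have L1: "L \<ge> 1" and L3: "L \<ge> 3" by auto
  have r_eq: "r = 1 - 4 / real (L+1)" by (simp add: r_def)
  have "degree P \<le> length ws * (2 * L)" unfolding P_def by (rule degree_Phi[OF L1])
  also have "length ws * (2 * L) = 2 * (s * (n div s))" by (simp add: len L_def)
  also have "s * (n div s) \<le> n" by (rule times_div_less_eq_dividend)
  finally show "degree P \<le> 2 * n" by simp
  define z where "z = (\<lambda>k::nat. cis (- (2 * pi * real k / real (2*n+1))))"
  have bf1: "cmod (Bf L r (w * z k)) \<le> 1" if "w \<in> set ws" for w k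
    by (rule Bf_bounds(1)[OF _ L3]) (use hw that in \<open>simp_all add: r_def z_def norm_mult\<close>)
  have tel: "cmod (1 - (\<Prod>w\<leftarrow>ws. Bf L r (w * z k))) \<le> (\<Sum>w\<leftarrow>ws. cmod (1 - Bf L r (w * z k)))
         \<and> cmod (\<Prod>w\<leftarrow>ws. Bf L r (w * z k)) \<le> 1" for k
    using telescope0[of "map (\<lambda>w. Bf L r (w * z k)) ws"] bf1 by (simp add: o_def)
  have ak: "a k = cmod (1 - (\<Prod>w\<leftarrow>ws. Bf L r (w * z k)))" for k
    by (simp add: a_def P_def poly_Phi z_def)
  show "a k \<le> 2" for k
  proof -
    have "cmod (1 - (\<Prod>w\<leftarrow>ws. Bf L r (w * z k))) \<le> cmod (1::complex) + cmod (\<Prod>w\<leftarrow>ws. Bf L r (w * z k))"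
      by (rule norm_triangle_ineq4)
    then show ?thesis using tel[of k] by (simp add: ak)
  qed
  define N where "N = 2 * n + 1"
  have N1: "N \<ge> 1" by (simp add: N_def)
  define B where "B = 4 + (10/3) * (4 / real (L+1)) * real N * (1 + ln (real N))"
  have fs: "(\<Sum>k\<le>2*n. cmod (1 - Bf L r (w * z k))) \<le> B" if "w \<in> set ws" for w
  proof -
    have "{..2*n} = {..<N}" by (auto simp: N_def)
    then have "(\<Sum>k\<le>2*n. cmod (1 - Bf L r (w * z k))) =
               (\<Sum>k<N. cmod (1 - Bf L r (w * cis (- (2 * pi * real k / real N)))))"
      by (simp add: z_def N_def)
    also have "\<dots> \<le> B" unfolding B_def
      by (rule factor_sum[OF r_eq L3 _ N1]) (use hw that in auto)
    finally show ?thesis .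
  qed
  have "(\<Sum>k\<le>2*n. a k) \<le> (\<Sum>k\<le>2*n. (\<Sum>w\<leftarrow>ws. cmod (1 - Bf L r (w * z k))))"
    by (rule sum_mono) (use tel ak in auto)
  also have "\<dots> = (\<Sum>w\<leftarrow>ws. (\<Sum>k\<le>2*n. cmod (1 - Bf L r (w * z k))))"
    by (rule sum_sum_list_swap)
  also have "\<dots> \<le> real s * B"
    using sum_list_le_const[of ws "\<lambda>w. (\<Sum>k\<le>2*n. cmod (1 - Bf L r (w * z k)))" B] fs len by simp
  also have "\<dots> \<le> 124 * real s ^ 2 * ln (exp 1 * real n)"
  proof -
    have n0: "real n > 0" using ns s1 by simp
    have s0: "real s \<ge> 1" using s1 by simp
    have nlt: "real n < real (L+1) * real s"
    proof -
      have e: "n = s * (n div s) + n mod s" by simp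
      have "n mod s < s" using s1 by simp
      then have "n < s + s * (n div s)" using e by linarith
      then have "n < (L + 1) * s" by (simp add: L_def algebra_simps)
      then show ?thesis by (metis of_nat_less_iff of_nat_mult)
    qed
    have eps: "4 / real (L+1) \<le> 4 * real s / real n"
      using nlt n0 s0 by (simp add: field_simps)
    have Nn: "real N \<le> 3 * real n" using ns s1 by (simp add: N_def)
    have e1: "(4 / real (L+1)) * real N \<le> 12 * real s"
    proof -
      have "(4 / real (L+1)) * real N \<le> (4 * real s / real n) * (3 * real n)"
        using eps Nn by (intro mult_mono) auto
      also have "\<dots> = 12 * real s" using n0 by simp
      finally show ?thesis .
    qed
    have lnN: "1 + ln (real N) \<le> 3 * (1 + ln (real n))"
    proof -
      have "ln (real N) \<le> ln (3 * real n)" using Nn N1 by (subst ln_le_cancel_iff) auto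
      also have "\<dots> = ln 3 + ln (real n)" using n0 by (simp add: ln_mult)
      also have "ln (3::real) \<le> 2" using ln_le_minus_one[of 3] by simp
      finally have "ln (real N) \<le> 2 + ln (real n)" by simp
      moreover have "ln (real n) \<ge> 0" using n0 by (simp add: ln_ge_zero_iff)
      ultimately show ?thesis by (simp add: algebra_simps)
    qed
    have lnN0: "1 + ln (real N) \<ge> 0" using N1 by simp
    have "B \<le> 4 + (10/3) * (12 * real s) * (3 * (1 + ln (real n)))"
    proof -
      have "(10/3) * (4 / real (L+1)) * real N * (1 + ln (real N)) =
            (10/3) * ((4 / real (L+1)) * real N) * (1 + ln (real N))" by simp
      also have "\<dots> \<le> (10/3) * (12 * real s) * (3 * (1 + ln (real n)))"
      proof -
        have "((4 / real (L+1)) * real N) * (1 + ln (real N)) \<le> (12 * real s) * (3 * (1 + ln (real n)))"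
          by (rule mult_mono[OF e1 lnN]) (use s0 lnN0 in auto)
        then have "(10/3) * (((4 / real (L+1)) * real N) * (1 + ln (real N))) \<le> (10/3) * ((12 * real s) * (3 * (1 + ln (real n))))"
          by (rule mult_left_mono) simp
        then show ?thesis by (simp only: mult.assoc)
      qed
      finally show ?thesis by (simp add: B_def)
    qed
    moreover have "(10/3) * (12 * real s) * (3 * (1 + ln (real n))) = 120 * real s * (1 + ln (real n))"
      by simp
    ultimately have Bb: "B \<le> 4 + 120 * real s * (1 + ln (real n))" by linarith
    have "real s * B \<le> real s * (4 + 120 * real s * (1 + ln (real n)))"
      using s0 Bb by (intro mult_left_mono) auto
    also have "\<dots> = 4 * real s + 120 * real s ^ 2 * (1 + ln (real n))"
      by (simp add: algebra_simps power2_eq_square)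
    also have "\<dots> \<le> 124 * real s ^ 2 * (1 + ln (real n))"
    proof -
      have l0: "1 + ln (real n) \<ge> 1" using n0 ns s1 by simp
      have "real s \<le> real s ^ 2" using s0 by (simp add: power2_eq_square)
      also have "\<dots> \<le> real s ^ 2 * (1 + ln (real n))"
        using l0 mult_left_mono[of 1 "1 + ln (real n)" "real s ^ 2"] by simp
      finally have h: "real s \<le> real s ^ 2 * (1 + ln (real n))" .
      define X where "X = real s ^ 2 * (1 + ln (real n))"
      have hX: "real s \<le> X" using h by (simp only: X_def)
      have "4 * real s + 120 * X \<le> 124 * X" using hX by linarith
      then show ?thesis by (simp add: X_def mult.assoc)
    qed
    also have "1 + ln (real n) = ln (exp 1 * real n)" using n0 by (simp add: ln_mult)
    finally show ?thesis .
  qed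
  finally show "(\<Sum>k\<le>2*n. a k) \<le> 124 * real s ^ 2 * ln (exp 1 * real n)" .
qed

lemma lp_bound:
  fixes a :: "nat \<Rightarrow> real" and c X p :: real and n :: nat
  assumes a0: "\<And>k. 0 \<le> a k" and a2: "\<And>k. a k \<le> c" and c1: "c \<ge> 1"
    and sm: "(\<Sum>k\<le>2*n. a k) \<le> X" and p: "p \<ge> 1"
  shows "(\<Sum>k\<le>2*n. (a k / sqrt (real (2*n+1))) powr p) powr (1/p) \<le> c * X powr (1/p) / sqrt (real (2*n+1))"
proof -
  define q where "q = sqrt (real (2*n+1))"
  have q0: "q > 0" by (simp add: q_def)
  define d where "d = c / q"
  have d0: "d > 0" using c1 q0 by (simp add: d_def)
  have X0: "X \<ge> 0" using sm a0 by (meson order_trans sum_nonneg)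
  have hterm: "(a k / q) powr p \<le> d powr p * (a k / c)" for k
  proof -
    have "a k / q = d * (a k / c)" using c1 q0 by (simp add: d_def field_simps)
    then have "(a k / q) powr p = (d * (a k / c)) powr p" by (simp only:)
    also have "\<dots> = d powr p * (a k / c) powr p"
      by (rule powr_mult)
    also have "(a k / c) powr p \<le> (a k / c) powr 1"
      by (rule powr_mono') (use p a0[of k] a2[of k] c1 in auto)
    also have "(a k / c) powr 1 = a k / c" using a0[of k] c1 by simp
    finally show ?thesis using d0 by (simp add: mult_left_mono)
  qed
  have "(\<Sum>k\<le>2*n. (a k / q) powr p) \<le> (\<Sum>k\<le>2*n. d powr p * (a k / c))"
    by (rule sum_mono) (rule hterm)
  also have "\<dots> = d powr p * ((\<Sum>k\<le>2*n. a k) / c)"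
    by (simp add: sum_distrib_left sum_divide_distrib)
  also have "\<dots> \<le> d powr p * (X / c)"
    using sm c1 by (intro mult_left_mono divide_right_mono) auto
  also have "\<dots> \<le> d powr p * X"
  proof -
    have "X / c \<le> X" using X0 c1 by (simp add: divide_le_eq mult_le_cancel_left1)
    then show ?thesis by (intro mult_left_mono) auto
  qed
  finally have h: "(\<Sum>k\<le>2*n. (a k / q) powr p) \<le> d powr p * X" .
  have "(\<Sum>k\<le>2*n. (a k / q) powr p) powr (1/p) \<le> (d powr p * X) powr (1/p)"
    by (rule powr_mono2) (use h p in \<open>auto intro: sum_nonneg\<close>)
  also have "(d powr p * X) powr (1/p) = (d powr p) powr (1/p) * X powr (1/p)"
    using X0 d0 by (simp add: powr_mult)
  also have "(d powr p) powr (1/p) = d" using p d0 by (simp add: powr_powr)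
  finally show ?thesis by (simp add: q_def d_def)
qed

lemma c_star_ge: "c_star \<ge> 2"
proof -
  have "pi^2 \<ge> 0" by simp
  then show ?thesis by (simp add: c_star_def)
qed

theorem proposition6:
  shows "\<exists>c0 c1 :: real. c0 > 0 \<and> c1 > 0 \<and>
    (\<forall>(s::nat) (m::nat) (n::nat) (ws::complex list).
       s \<ge> 1 \<longrightarrow> real m \<ge> c0 * real s ^ 2 * ln (2 * real s) \<longrightarrow> n = 9 * m \<longrightarrow>
       length ws = s \<longrightarrow> (\<forall>w\<in>set ws. cmod w \<le> 1) \<longrightarrow>
       (\<exists>\<phi>. \<phi> \<in> Cplus (2 * n) \<and> reproducing \<phi> (Xsp ws) \<and>
          (\<forall>p::real. p \<ge> 1 \<longrightarrow>
             lp_norm n p (dft_plus n \<phi>) \<le>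
               c_star * (c1 * real s ^ 2 * ln (exp 1 * real n)) powr (1 / p) / sqrt (real (2 * n + 1))) \<and>
          linf_norm n (dft_plus n \<phi>) \<le> c_star / sqrt (real (2 * n + 1))))"
proof (rule exI[of _ 2], rule exI[of _ 124], intro conjI)
  show "(2::real) > 0" by simp
  show "(124::real) > 0" by simp
  show "\<forall>(s::nat) (m::nat) (n::nat) (ws::complex list).
       s \<ge> 1 \<longrightarrow> real m \<ge> 2 * real s ^ 2 * ln (2 * real s) \<longrightarrow> n = 9 * m \<longrightarrow>
       length ws = s \<longrightarrow> (\<forall>w\<in>set ws. cmod w \<le> 1) \<longrightarrow>
       (\<exists>\<phi>. \<phi> \<in> Cplus (2 * n) \<and> reproducing \<phi> (Xsp ws) \<and>
          (\<forall>p::real. p \<ge> 1 \<longrightarrow>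
             lp_norm n p (dft_plus n \<phi>) \<le>
               c_star * (124 * real s ^ 2 * ln (exp 1 * real n)) powr (1 / p) / sqrt (real (2 * n + 1))) \<and>
          linf_norm n (dft_plus n \<phi>) \<le> c_star / sqrt (real (2 * n + 1)))"
  proof (intro allI impI)
  fix s m n :: nat and ws :: "complex list"
  assume s1: "s \<ge> 1" and hm: "real m \<ge> 2 * real s ^ 2 * ln (2 * real s)" and hn: "n = 9 * m"
    and len: "length ws = s" and hw: "\<forall>w\<in>set ws. cmod w \<le> 1"
  have ln2: "ln (2::real) \<ge> 1/2"
  proof -
    have "ln (1/2::real) \<le> 1/2 - 1" by (rule ln_le_minus_one) simp
    then show ?thesis by (simp add: ln_div)
  qed
  have "ln (2 * real s) \<ge> ln 2" using s1 by (subst ln_le_cancel_iff) auto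
  with ln2 have "ln (2 * real s) \<ge> 1/2" by linarith
  then have "2 * real s ^ 2 * ln (2 * real s) \<ge> 2 * real s ^ 2 * (1/2)"
    by (intro mult_left_mono) auto
  with hm have "real m \<ge> real s ^ 2" by linarith
  then have "real (s ^ 2) \<le> real m" by simp
  then have "m \<ge> s ^ 2" by (simp only: of_nat_le_iff)
  moreover have "s ^ 2 \<ge> s" using s1 by (simp add: power2_eq_square)
  ultimately have ns: "n \<ge> 4 * s" using hn by linarith
  define L where "L = n div s"
  define r where "r = 1 - 4 / real (L+1)"
  define P where "P = Phi L r ws"
  define a where "a = (\<lambda>k. cmod (poly P (cis (- (2 * pi * real k / real (2*n+1))))))"
  note mb = main_bounds[OF s1 ns len hw, folded L_def, folded r_def, folded P_def, folded a_def]
  have degP: "degree P \<le> 2 * n" by (rule mb(1))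
  have a2: "a k \<le> 2" for k
    using main_bounds(2)[OF s1 ns len hw, of k] by (simp only: a_def P_def r_def L_def)
  have asum: "(\<Sum>k\<le>2*n. a k) \<le> 124 * real s ^ 2 * ln (exp 1 * real n)" by (rule mb(3))
  have a0: "0 \<le> a k" for k by (simp add: a_def)
  have dft: "cmod (dft_plus n (seq_of P) k) = a k / sqrt (real (2*n+1))" for k
    using cmod_dft_plus[OF degP] by (simp add: a_def)
  have cs: "c_star \<ge> 2" by (rule c_star_ge)
  show "\<exists>\<phi>. \<phi> \<in> Cplus (2 * n) \<and> reproducing \<phi> (Xsp ws) \<and>
          (\<forall>p::real. p \<ge> 1 \<longrightarrow>
             lp_norm n p (dft_plus n \<phi>) \<le>
               c_star * (124 * real s ^ 2 * ln (exp 1 * real n)) powr (1 / p) / sqrt (real (2 * n + 1))) \<and>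
          linf_norm n (dft_plus n \<phi>) \<le> c_star / sqrt (real (2 * n + 1))"
  proof (intro exI[of _ "seq_of P"] conjI allI impI)
    show "seq_of P \<in> Cplus (2 * n)" by (rule seq_of_Cplus[OF degP])
    show "reproducing (seq_of P) (Xsp ws)" unfolding P_def by (rule reproducing_Phi)
    fix p :: real assume p: "p \<ge> 1"
    have "lp_norm n p (dft_plus n (seq_of P)) =
          (\<Sum>k\<le>2*n. (a k / sqrt (real (2*n+1))) powr p) powr (1/p)"
      by (simp add: lp_norm_def dft)
    also have "\<dots> \<le> c_star * (124 * real s ^ 2 * ln (exp 1 * real n)) powr (1/p) / sqrt (real (2*n+1))"
      by (rule lp_bound[OF a0 _ _ asum p]) (use a2 cs in \<open>auto intro: order_trans\<close>)
    finally show "lp_norm n p (dft_plus n (seq_of P)) \<le>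
        c_star * (124 * real s ^ 2 * ln (exp 1 * real n)) powr (1 / p) / sqrt (real (2 * n + 1))" .
  next
    have "Max ((\<lambda>k. cmod (dft_plus n (seq_of P) k)) ` {..2*n}) \<le> c_star / sqrt (real (2*n+1))"
    proof (subst Max_le_iff)
      show "\<forall>x\<in>(\<lambda>k. cmod (dft_plus n (seq_of P) k)) ` {..2*n}. x \<le> c_star / sqrt (real (2*n+1))"
      proof
        fix x assume "x \<in> (\<lambda>k. cmod (dft_plus n (seq_of P) k)) ` {..2*n}"
        then obtain k where xk: "x = cmod (dft_plus n (seq_of P) k)" by auto
        have "a k \<le> c_star" using a2[of k] cs by linarith
        then show "x \<le> c_star / sqrt (real (2*n+1))"
          by (simp add: xk dft divide_right_mono)
      qed
    qed auto
    then show "linf_norm n (dft_plus n (seq_of P)) \<le> c_star / sqrt (real (2 * n + 1))"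
      by (simp add: linf_norm_def)
  qed
  qed
qed

end
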